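(* Let $n\ge 2$, $p\in(0,1)$, and let $Y,\mu,\sigma^2,\gamma_s$ be as follows: $Y$ is the number of isolated vertices of the Erdős–Rényi random graph on $n$ vertices with edge probability $p$, $\mu=E Y$, $\sigma^2=\mathrm{Var}(Y)$, and $\gamma_s=e^s(pe^s+1-p)^{n-2}(npe^s+1-p)+(n-1)p+1$. Then for every $\theta_0\ge 0$, $$P\Big(\frac{Y-\mu}{\sigma}\ge t\Big)\le\begin{cases}\exp\Big(-\dfrac{t^2\sigma^2}{\mu\,\gamma_{\theta_0/\sigma}}\Big), & t\in\big[0,\ \theta_0\mu\gamma_{\theta_0/\sigma}/(2\sigma^2)\big],\\[2mm] \exp\Big(-\theta_0t+\dfrac{\mu\gamma_{\theta_0/\sigma}\theta_0^2}{4\sigma^2}\Big), & t>\theta_0\mu\gamma_{\theta_0/\sigma}/(2\sigma^2).\end{cases}$$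
   Context: The Erdős–Rényi random graph on $\{1,\ldots,n\}$ with edge probability $p$ has independent Bernoulli($p$) edge indicators for all unordered pairs of distinct vertices. An isolated vertex is a vertex of degree $0$. Here $\mu=n(1-p)^{n-1}$ and $\sigma^2=n(1-p)^{n-1}(1+np(1-p)^{n-2}-(1-p)^{n-2})$. *)

theory Defs
  imports "HOL-Probability.Probability"
begin

definition vpairs :: "nat \<Rightarrow> nat set set" where
  "vpairs n = {{i, j} | i j. i \<in> {1..n} \<and> j \<in> {1..n} \<and> i < j}"

text \<open>Erdos-Renyi random graph G(n,p): independent Bernoulli(p) indicator for every
  potential edge; a graph is its edge-indicator function (False outside vpairs n).\<close>
definition ER_graph :: "nat \<Rightarrow> real \<Rightarrow> (nat set \<Rightarrow> bool) pmf" where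
  "ER_graph n p = Pi_pmf (vpairs n) False (\<lambda>_. bernoulli_pmf p)"

definition isolated_count :: "nat \<Rightarrow> (nat set \<Rightarrow> bool) \<Rightarrow> nat" where
  "isolated_count n G = card {v \<in> {1..n}. \<forall>u \<in> {1..n}. u \<noteq> v \<longrightarrow> \<not> G {u, v}}"

definition iso_mean :: "nat \<Rightarrow> real \<Rightarrow> real" where
  "iso_mean n p = measure_pmf.expectation (ER_graph n p) (\<lambda>G. real (isolated_count n G))"

definition iso_var :: "nat \<Rightarrow> real \<Rightarrow> real" where
  "iso_var n p = measure_pmf.variance (ER_graph n p) (\<lambda>G. real (isolated_count n G))"

definition gamma_iso :: "nat \<Rightarrow> real \<Rightarrow> real \<Rightarrow> real" where
  "gamma_iso n p s = exp s * (p * exp s + 1 - p) ^ (n - 2) * (real n * p * exp s + 1 - p)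
                     + (real n - 1) * p + 1"

end

theory Submission
  imports Defs
begin


definition wt :: "real \<Rightarrow> 'a set \<Rightarrow> 'a set \<Rightarrow> real" where
  "wt p P E = (\<Prod>e\<in>P. if e \<in> E then p else 1 - p)"

lemma sum_Pow_insert:
  assumes "finite P" "a \<notin> P"
  shows "(\<Sum>E\<in>Pow (insert a P). H E) = (\<Sum>E\<in>Pow P. H E + H (insert a E))"
proof -
  have d: "Pow P \<inter> insert a ` Pow P = {}" using assms by auto
  have i: "inj_on (insert a) (Pow P)" using assms unfolding inj_on_def by (metis Pow_iff in_mono insert_ident)
  have "(\<Sum>E\<in>Pow (insert a P). H E) = (\<Sum>E\<in>Pow P. H E) + (\<Sum>E\<in>insert a ` Pow P. H E)"
    unfolding Pow_insert using assms d by (intro sum.union_disjoint) auto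
  also have "(\<Sum>E\<in>insert a ` Pow P. H E) = (\<Sum>E\<in>Pow P. H (insert a E))"
    using sum.reindex[OF i] by simp
  finally show ?thesis by (simp add: sum.distrib)
qed

lemma wt_ins_out:
  assumes "finite P" "a \<notin> P" "E \<subseteq> P"
  shows "wt p (insert a P) E = (1 - p) * wt p P E"
  using assms unfolding wt_def by (subst prod.insert) auto

lemma wt_ins_in:
  assumes "finite P" "a \<notin> P" "E \<subseteq> P"
  shows "wt p (insert a P) (insert a E) = p * wt p P E"
proof -
  note True = assms(1)
  have "wt p (insert a P) (insert a E) = p * (\<Prod>e\<in>P. if e \<in> insert a E then p else 1 - p)"
    using True assms unfolding wt_def by (subst prod.insert) auto
  also have "(\<Prod>e\<in>P. if e \<in> insert a E then p else 1 - p) = wt p P E"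
    unfolding wt_def using assms by (intro prod.cong) auto
  finally show ?thesis .
qed

lemma wt_nonneg: "0 \<le> p \<Longrightarrow> p \<le> 1 \<Longrightarrow> 0 \<le> wt p P E"
  unfolding wt_def by (intro prod_nonneg) auto

lemma sum_wt: "finite P \<Longrightarrow> (\<Sum>E\<in>Pow P. wt p P E) = 1"
proof (induction P rule: finite_induct)
  case empty then show ?case by (simp add: wt_def)
next
  case (insert a P)
  have "(\<Sum>E\<in>Pow (insert a P). wt p (insert a P) E) = (\<Sum>E\<in>Pow P. (1-p) * wt p P E + p * wt p P E)"
    using insert by (subst sum_Pow_insert) (auto intro!: sum.cong simp: wt_ins_out wt_ins_in)
  also have "\<dots> = (\<Sum>E\<in>Pow P. wt p P E)" by (intro sum.cong) (auto simp: algebra_simps)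
  finally show ?case using insert by simp
qed

lemma sum_wt_exp: "finite P \<Longrightarrow> (\<Sum>E\<in>Pow P. wt p P E * exp (t * real (card E))) = (p * exp t + 1 - p) ^ card P"
proof (induction P rule: finite_induct)
  case empty then show ?case by (simp add: wt_def)
next
  case (insert a P)
  have "(\<Sum>E\<in>Pow (insert a P). wt p (insert a P) E * exp (t * real (card E))) =
     (\<Sum>E\<in>Pow P. (1-p) * (wt p P E * exp (t * real (card E))) + (p * exp t) * (wt p P E * exp (t * real (card E))))"
  proof -
    have "\<And>E. E \<subseteq> P \<Longrightarrow> card (insert a E) = Suc (card E)" using insert
      by (meson card_insert_disjoint finite_subset subsetD)
    then show ?thesis
    using insert by (subst sum_Pow_insert) (auto intro!: sum.cong simp: wt_ins_out wt_ins_in algebra_simps exp_add)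
  qed
  also have "\<dots> = (1-p) * (\<Sum>E\<in>Pow P. wt p P E * exp (t * real (card E))) + (p * exp t) * (\<Sum>E\<in>Pow P. wt p P E * exp (t * real (card E)))"
    by (simp add: sum.distrib sum_distrib_left)
  also have "\<dots> = (p * exp t + 1 - p) * (\<Sum>E\<in>Pow P. wt p P E * exp (t * real (card E)))"
    by (simp add: algebra_simps)
  finally show ?case using insert by simp
qed

lemma harris:
  assumes "finite P" "0 \<le> p" "p \<le> 1"
    and "\<And>E E'. E \<subseteq> E' \<Longrightarrow> E' \<subseteq> P \<Longrightarrow> F E \<le> F E'"
    and "\<And>E E'. E \<subseteq> E' \<Longrightarrow> E' \<subseteq> P \<Longrightarrow> G E' \<le> G E"
  shows "(\<Sum>E\<in>Pow P. wt p P E * F E * G E) \<le> (\<Sum>E\<in>Pow P. wt p P E * F E) * (\<Sum>E\<in>Pow P. wt p P E * G E)"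
  using assms(1,4,5)
proof (induction P arbitrary: F G rule: finite_induct)
  case empty then show ?case by (simp add: wt_def)
next
  case (insert a P)
  define F' where "F' E = (1-p) * F E + p * F (insert a E)" for E
  define G' where "G' E = (1-p) * G E + p * G (insert a E)" for E
  have L: "(\<Sum>E\<in>Pow (insert a P). wt p (insert a P) E * F E * G E) =
     (\<Sum>E\<in>Pow P. wt p P E * ((1-p) * F E * G E + p * F (insert a E) * G (insert a E)))"
    using insert(1,2) by (subst sum_Pow_insert) (auto intro!: sum.cong simp: wt_ins_out wt_ins_in algebra_simps)
  have RF: "(\<Sum>E\<in>Pow (insert a P). wt p (insert a P) E * F E) = (\<Sum>E\<in>Pow P. wt p P E * F' E)"
    using insert(1,2) by (subst sum_Pow_insert) (auto intro!: sum.cong simp: wt_ins_out wt_ins_in algebra_simps F'_def)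
  have RG: "(\<Sum>E\<in>Pow (insert a P). wt p (insert a P) E * G E) = (\<Sum>E\<in>Pow P. wt p P E * G' E)"
    using insert(1,2) by (subst sum_Pow_insert) (auto intro!: sum.cong simp: wt_ins_out wt_ins_in algebra_simps G'_def)
  have pw: "wt p P E * ((1-p) * F E * G E + p * F (insert a E) * G (insert a E)) \<le> wt p P E * F' E * G' E"
    if "E \<in> Pow P" for E
  proof -
    have f: "F E \<le> F (insert a E)" using that by (intro insert.prems(1)) auto
    have g: "G (insert a E) \<le> G E" using that by (intro insert.prems(2)) auto
    have "F' E * G' E - ((1-p) * F E * G E + p * F (insert a E) * G (insert a E))
        = p * (1-p) * ((F (insert a E) - F E) * (G E - G (insert a E)))"
      unfolding F'_def G'_def by (simp add: algebra_simps)
    also have "\<dots> \<ge> 0" using f g assms(2,3) by (intro mult_nonneg_nonneg) auto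
    finally have "(1-p) * F E * G E + p * F (insert a E) * G (insert a E) \<le> F' E * G' E" by simp
    from mult_left_mono[OF this wt_nonneg[OF assms(2,3)]] show ?thesis by (simp add: mult.assoc)
  qed
  have IH: "(\<Sum>E\<in>Pow P. wt p P E * F' E * G' E) \<le> (\<Sum>E\<in>Pow P. wt p P E * F' E) * (\<Sum>E\<in>Pow P. wt p P E * G' E)"
  proof (rule insert.IH)
    fix E E' assume "E \<subseteq> E'" "E' \<subseteq> P"
    then have "F E \<le> F E'" "F (insert a E) \<le> F (insert a E')" by (auto intro!: insert.prems(1))
    then show "F' E \<le> F' E'" unfolding F'_def using assms(2,3)
      by (intro add_mono mult_left_mono) auto
  next
    fix E E' assume "E \<subseteq> E'" "E' \<subseteq> P"
    then have "G E' \<le> G E" "G (insert a E') \<le> G (insert a E)" by (auto intro!: insert.prems(2))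
    then show "G' E' \<le> G' E" unfolding G'_def using assms(2,3)
      by (intro add_mono mult_left_mono) auto
  qed
  have "(\<Sum>E\<in>Pow P. wt p P E * ((1-p) * F E * G E + p * F (insert a E) * G (insert a E)))
     \<le> (\<Sum>E\<in>Pow P. wt p P E * F' E * G' E)" by (rule sum_mono[OF pw])
  then show ?case unfolding L RF RG using IH by linarith
qed



lemma sum_Pow_split:
  assumes "finite P" "S \<subseteq> P"
  shows "(\<Sum>E\<in>Pow P. H E) = (\<Sum>A\<in>Pow (P - S). \<Sum>B\<in>Pow S. H (A \<union> B))"
proof -
  have bij: "bij_betw (\<lambda>(A, B). A \<union> B) (Pow (P - S) \<times> Pow S) (Pow P)"
    apply (rule bij_betw_byWitness[where f' = "\<lambda>E. (E - S, E \<inter> S)"])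
    using assms by auto
  have "(\<Sum>E\<in>Pow P. H E) = (\<Sum>x\<in>Pow (P - S) \<times> Pow S. H ((\<lambda>(A, B). A \<union> B) x))"
    using sum.reindex_bij_betw[OF bij, of H] by simp
  also have "\<dots> = (\<Sum>A\<in>Pow (P - S). \<Sum>B\<in>Pow S. H (A \<union> B))"
    by (subst sum.cartesian_product) (simp add: case_prod_beta)
  finally show ?thesis .
qed

lemma wt_split:
  assumes "finite P" "S \<subseteq> P" "A \<subseteq> P - S" "B \<subseteq> S"
  shows "wt p P (A \<union> B) = wt p (P - S) A * wt p S B"
proof -
  have "wt p P (A \<union> B) = (\<Prod>e\<in>(P - S) \<union> S. if e \<in> A \<union> B then p else 1 - p)"
    unfolding wt_def using assms(2) by (simp add: Un_absorb2)
  also have "\<dots> = (\<Prod>e\<in>P - S. if e \<in> A \<union> B then p else 1 - p) * (\<Prod>e\<in>S. if e \<in> A \<union> B then p else 1 - p)"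
    using assms by (intro prod.union_disjoint) (auto intro: finite_subset)
  also have "(\<Prod>e\<in>P - S. if e \<in> A \<union> B then p else 1 - p) = wt p (P - S) A"
    unfolding wt_def using assms by (intro prod.cong) auto
  also have "(\<Prod>e\<in>S. if e \<in> A \<union> B then p else 1 - p) = wt p S B"
    unfolding wt_def using assms by (intro prod.cong) auto
  finally show ?thesis .
qed

lemma sum_wt_remove:
  assumes "finite P" "S \<subseteq> P"
  shows "(\<Sum>E\<in>Pow P. wt p P E * (if E \<inter> S = {} then h E else 0))
       = (1 - p) ^ card S * (\<Sum>E\<in>Pow P. wt p P E * h (E - S))"
proof -
  have fS: "finite S" using assms finite_subset by blast
  have "(\<Sum>E\<in>Pow P. wt p P E * (if E \<inter> S = {} then h E else 0))
      = (\<Sum>A\<in>Pow (P - S). \<Sum>B\<in>Pow S. wt p (P - S) A * wt p S B * (if B = {} then h A else 0))"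
  proof (subst sum_Pow_split[OF assms], intro sum.cong refl)
    fix A B assume "A \<in> Pow (P - S)" "B \<in> Pow S"
    then have "(A \<union> B) \<inter> S = {} \<longleftrightarrow> B = {}" "B = {} \<Longrightarrow> A \<union> B = A" by auto
    then show "wt p P (A \<union> B) * (if (A \<union> B) \<inter> S = {} then h (A \<union> B) else 0) = wt p (P - S) A * wt p S B * (if B = {} then h A else 0)"
      using wt_split[OF assms] \<open>A \<in> Pow (P - S)\<close> \<open>B \<in> Pow S\<close> by simp
  qed
  also have "\<dots> = (\<Sum>A\<in>Pow (P - S). wt p (P - S) A * wt p S {} * h A)"
  proof (intro sum.cong refl)
    fix A
    have "(\<Sum>B\<in>Pow S. wt p (P - S) A * wt p S B * (if B = {} then h A else 0))
        = (\<Sum>B\<in>Pow S. if B = {} then wt p (P - S) A * wt p S B * h A else 0)"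
      by (intro sum.cong) auto
    also have "\<dots> = wt p (P - S) A * wt p S {} * h A" using fS by (subst sum.delta) auto
    finally show "(\<Sum>B\<in>Pow S. wt p (P - S) A * wt p S B * (if B = {} then h A else 0)) = wt p (P - S) A * wt p S {} * h A" .
  qed
  also have "wt p S {} = (1 - p) ^ card S" unfolding wt_def by simp
  finally have L: "(\<Sum>E\<in>Pow P. wt p P E * (if E \<inter> S = {} then h E else 0)) = (\<Sum>A\<in>Pow (P - S). wt p (P - S) A * (1 - p) ^ card S * h A)" .
  have "(1 - p) ^ card S * (\<Sum>E\<in>Pow P. wt p P E * h (E - S))
     = (1 - p) ^ card S * (\<Sum>A\<in>Pow (P - S). \<Sum>B\<in>Pow S. wt p (P - S) A * wt p S B * h A)"
  proof (subst sum_Pow_split[OF assms], intro arg_cong[where f = "\<lambda>x. _ * x"] sum.cong refl)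
    fix A B assume "A \<in> Pow (P - S)" "B \<in> Pow S"
    then have "(A \<union> B) - S = A" by auto
    then show "wt p P (A \<union> B) * h (A \<union> B - S) = wt p (P - S) A * wt p S B * h A"
      using wt_split[OF assms] \<open>A \<in> Pow (P - S)\<close> \<open>B \<in> Pow S\<close> by simp
  qed
  also have "(\<Sum>A\<in>Pow (P - S). \<Sum>B\<in>Pow S. wt p (P - S) A * wt p S B * h A)
       = (\<Sum>A\<in>Pow (P - S). wt p (P - S) A * h A * (\<Sum>B\<in>Pow S. wt p S B))"
    by (intro sum.cong refl) (simp only: sum_distrib_left mult.assoc mult.commute[of "h _" "wt p S _"])
  finally show ?thesis unfolding L using sum_wt[OF fS] by (simp add: sum_distrib_left algebra_simps)
qed

lemma sum_wt_count:
  assumes "finite P" "S \<subseteq> P"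
  shows "(\<Sum>E\<in>Pow P. wt p P E * f (card (E \<inter> S))) = (\<Sum>B\<in>Pow S. wt p S B * f (card B))"
proof -
  have fS: "finite S" using assms finite_subset by blast
  have fPS: "finite (P - S)" using assms by simp
  have "(\<Sum>E\<in>Pow P. wt p P E * f (card (E \<inter> S)))
      = (\<Sum>A\<in>Pow (P - S). \<Sum>B\<in>Pow S. wt p (P - S) A * (wt p S B * f (card B)))"
  proof (subst sum_Pow_split[OF assms], intro sum.cong refl)
    fix A B assume "A \<in> Pow (P - S)" "B \<in> Pow S"
    then have "(A \<union> B) \<inter> S = B" by auto
    then show "wt p P (A \<union> B) * f (card ((A \<union> B) \<inter> S)) = wt p (P - S) A * (wt p S B * f (card B))"
      using wt_split[OF assms] \<open>A \<in> Pow (P - S)\<close> \<open>B \<in> Pow S\<close> by simp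
  qed
  also have "\<dots> = (\<Sum>A\<in>Pow (P - S). wt p (P - S) A) * (\<Sum>B\<in>Pow S. wt p S B * f (card B))"
    by (simp add: sum_product)
  finally show ?thesis using sum_wt[OF fPS] by simp
qed



definition iso :: "nat \<Rightarrow> nat set set \<Rightarrow> nat set" where
  "iso n E = {v \<in> {1..n}. \<forall>u \<in> {1..n}. u \<noteq> v \<longrightarrow> {u, v} \<notin> E}"

definition Sv :: "nat \<Rightarrow> nat \<Rightarrow> nat set set" where
  "Sv n v = {e \<in> vpairs n. v \<in> e}"

lemma isolated_count_set: "isolated_count n (\<lambda>e. e \<in> E) = card (iso n E)"
  unfolding isolated_count_def iso_def by simp

lemma finite_vpairs: "finite (vpairs n)"
proof -
  have "vpairs n \<subseteq> Pow {1..n}" unfolding vpairs_def by auto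
  then show ?thesis by (rule finite_subset) simp
qed

lemma pair_in_vpairs: "u \<in> {1..n} \<Longrightarrow> v \<in> {1..n} \<Longrightarrow> u \<noteq> v \<Longrightarrow> {u, v} \<in> vpairs n"
proof (cases "u < v")
  case True
  assume "u \<in> {1..n}" "v \<in> {1..n}"
  then show ?thesis unfolding vpairs_def using True by blast
next
  case False
  assume "u \<in> {1..n}" "v \<in> {1..n}" "u \<noteq> v"
  then have "v < u" "{u, v} = {v, u}" using False by (auto simp: insert_commute)
  then show ?thesis unfolding vpairs_def using \<open>u \<in> {1..n}\<close> \<open>v \<in> {1..n}\<close> by blast
qed

lemma vpairs_elem: "e \<in> vpairs n \<Longrightarrow> v \<in> e \<Longrightarrow> \<exists>u \<in> {1..n}. u \<noteq> v \<and> e = {u, v} \<and> v \<in> {1..n}"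
  unfolding vpairs_def by auto

lemma Sv_sub: "Sv n v \<subseteq> vpairs n" unfolding Sv_def by auto

lemma iso_iff:
  assumes "v \<in> {1..n}" "E \<subseteq> vpairs n"
  shows "v \<in> iso n E \<longleftrightarrow> E \<inter> Sv n v = {}"
proof
  assume a: "v \<in> iso n E"
  show "E \<inter> Sv n v = {}"
  proof (rule ccontr)
    assume "E \<inter> Sv n v \<noteq> {}"
    then obtain e where e: "e \<in> E" "e \<in> vpairs n" "v \<in> e" unfolding Sv_def by auto
    from vpairs_elem[OF e(2,3)] obtain u where "u \<in> {1..n}" "u \<noteq> v" "e = {u, v}" by blast
    then show False using a e(1) unfolding iso_def by auto
  qed
next
  assume a: "E \<inter> Sv n v = {}"
  show "v \<in> iso n E" unfolding iso_def
  proof (safe)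
    show "v \<in> {1..n}" using assms by auto
  next
    fix u assume "u \<in> {1..n}" "u \<noteq> v" "{u, v} \<in> E"
    then have "{u, v} \<in> Sv n v" unfolding Sv_def using pair_in_vpairs[of u n v] assms by auto
    then show False using a \<open>{u, v} \<in> E\<close> by auto
  qed
qed

lemma card_Sv:
  assumes "v \<in> {1..n}"
  shows "card (Sv n v) = n - 1"
proof -
  have "Sv n v = (\<lambda>u. {u, v}) ` ({1..n} - {v})"
  proof
    show "Sv n v \<subseteq> (\<lambda>u. {u, v}) ` ({1..n} - {v})"
      unfolding Sv_def using vpairs_elem by fastforce
    show "(\<lambda>u. {u, v}) ` ({1..n} - {v}) \<subseteq> Sv n v"
      unfolding Sv_def using pair_in_vpairs assms by auto
  qed
  moreover have "inj_on (\<lambda>u. {u, v}) ({1..n} - {v})"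
    unfolding inj_on_def by (auto simp: doubleton_eq_iff)
  ultimately show ?thesis using assms by (simp add: card_image)
qed

lemma iso_anti: "E \<subseteq> E' \<Longrightarrow> iso n E' \<subseteq> iso n E"
  unfolding iso_def by auto

lemma card_iso_anti: "E \<subseteq> E' \<Longrightarrow> card (iso n E') \<le> card (iso n E)"
  by (intro card_mono iso_anti) (auto simp: iso_def)

lemma card_iso_remove:
  assumes "v \<in> {1..n}" "E \<subseteq> vpairs n"
  shows "card (iso n (E - Sv n v)) \<le> card (iso n E) + 1 + card (E \<inter> Sv n v)"
proof -
  define N where "N = {u \<in> {1..n}. u \<noteq> v \<and> {u, v} \<in> E}"
  have sub: "iso n (E - Sv n v) \<subseteq> iso n E \<union> {v} \<union> N"
  proof
    fix w assume w: "w \<in> iso n (E - Sv n v)"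
    show "w \<in> iso n E \<union> {v} \<union> N"
    proof (rule ccontr)
      assume c: "w \<notin> iso n E \<union> {v} \<union> N"
      have wV: "w \<in> {1..n}" using w unfolding iso_def by auto
      then obtain u where u: "u \<in> {1..n}" "u \<noteq> w" "{u, w} \<in> E" using c unfolding iso_def by auto
      then have "{u, w} \<in> Sv n v" using w unfolding iso_def by auto
      then have "v = u \<or> v = w" unfolding Sv_def by auto
      then show False using c u wV unfolding N_def by (auto simp: insert_commute)
    qed
  qed
  have fN: "finite N" unfolding N_def by auto
  have "card N \<le> card (E \<inter> Sv n v)"
  proof (rule card_inj_on_le[where f = "\<lambda>u. {u, v}"])
    show "inj_on (\<lambda>u. {u, v}) N" unfolding inj_on_def N_def by (auto simp: doubleton_eq_iff)
    show "(\<lambda>u. {u, v}) ` N \<subseteq> E \<inter> Sv n v" unfolding N_def Sv_def using assms(2) by auto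
    show "finite (E \<inter> Sv n v)" using finite_vpairs Sv_sub by (meson finite_Int finite_subset)
  qed
  have "card (iso n (E - Sv n v)) \<le> card (iso n E \<union> {v} \<union> N)"
    by (intro card_mono sub) (auto simp: iso_def N_def)
  also have "\<dots> \<le> card (iso n E \<union> {v}) + card N" by (rule card_Un_le)
  also have "card (iso n E \<union> {v}) \<le> card (iso n E) + card {v}" by (rule card_Un_le)
  finally show ?thesis using \<open>card N \<le> _\<close> by simp
qed

lemma card_iso_sum:
  assumes "E \<subseteq> vpairs n"
  shows "real (card (iso n E)) = (\<Sum>v\<in>{1..n}. if E \<inter> Sv n v = {} then 1 else 0)"
proof -
  have "iso n E = {v \<in> {1..n}. E \<inter> Sv n v = {}}" using iso_iff[OF _ assms] unfolding iso_def by blast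
  moreover have "(\<Sum>v\<in>{1..n}. if E \<inter> Sv n v = {} then 1 else 0) = (\<Sum>v\<in>{v \<in> {1..n}. E \<inter> Sv n v = {}}. (1::real))"
    by (rule sum.inter_filter[symmetric]) simp
  ultimately show ?thesis by simp
qed

lemma exp_tanh_ineq:
  assumes "0 \<le> (x::real)"
  shows "exp x - 1 \<le> x * (exp x + 1) / 2"
proof -
  define \<phi> where "\<phi> y = y * (exp y + 1) / 2 - exp y + 1" for y :: real
  have "\<phi> 0 \<le> \<phi> x"
  proof (rule DERIV_nonneg_imp_nondecreasing[OF assms])
    fix y :: real assume "0 \<le> y" "y \<le> x"
    have d: "(\<phi> has_real_derivative ((exp y + 1) / 2 + y * exp y / 2 - exp y)) (at y)"
      unfolding \<phi>_def by (auto intro!: derivative_eq_intros simp: algebra_simps)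
    have "1 - y \<le> exp (- y)" using exp_ge_add_one_self[of "-y"] by simp
    then have "exp y * (1 - y) \<le> exp y * exp (-y)" by (intro mult_left_mono) auto
    then have "exp y * (1 - y) \<le> 1" by (simp add: exp_minus)
    then have "exp y - y * exp y \<le> 1" by (simp add: algebra_simps)
    then have A: "0 \<le> (1 - (exp y - y * exp y)) / 2" by simp
    have B: "(exp y + 1) / 2 + y * exp y / 2 - exp y = (1 - (exp y - y * exp y)) / 2"
      by (simp add: field_simps)
    have "(exp y + 1) / 2 + y * exp y / 2 - exp y \<ge> 0" by (subst B) (rule A)
    then show "\<exists>D. (\<phi> has_real_derivative D) (at y) \<and> 0 \<le> D" using d by blast
  qed
  then show ?thesis unfolding \<phi>_def by simp
qed



context
  fixes n :: nat and p :: real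
  assumes n2: "n \<ge> 2" and p0: "0 < p" and p1: "p < 1"
begin

abbreviation "P \<equiv> vpairs n"
definition Yc :: "nat set set \<Rightarrow> real" where "Yc E = real (card (iso n E))"

lemma wt_nn: "0 \<le> wt p A E" using p0 p1 by (intro wt_nonneg) auto

lemma gamma_sum:
  assumes v: "v \<in> {1..n}"
  shows "(\<Sum>B\<in>Pow (Sv n v). wt p (Sv n v) B * ((1 + real (card B)) * (exp (s * (1 + real (card B))) + 1)))
         = gamma_iso n p s"
proof -
  define K where "K = Sv n v"
  have fK: "finite K" unfolding K_def by (rule finite_subset[OF Sv_sub finite_vpairs])
  have cK: "card K = n - 1" unfolding K_def using card_Sv[OF v] .
  define D1 where "D1 t = (\<Sum>B\<in>Pow K. wt p K B * ((1 + real (card B)) * exp (t * (1 + real (card B)))))" for t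
  define D2 where "D2 t = exp t * (p * exp t + 1 - p) ^ (n - 1) + exp t * (real (n - 1) * (p * exp t + 1 - p) ^ (n - 2) * (p * exp t))" for t
  have eqf: "(\<lambda>t. \<Sum>B\<in>Pow K. wt p K B * exp (t * (1 + real (card B)))) = (\<lambda>t. exp t * (p * exp t + 1 - p) ^ (n - 1))"
  proof
    fix t
    have "(\<Sum>B\<in>Pow K. wt p K B * exp (t * (1 + real (card B)))) = exp t * (\<Sum>B\<in>Pow K. wt p K B * exp (t * real (card B)))"
      by (simp add: sum_distrib_left algebra_simps exp_add distrib_left)
    then show "(\<Sum>B\<in>Pow K. wt p K B * exp (t * (1 + real (card B)))) = exp t * (p * exp t + 1 - p) ^ (n - 1)"
      using sum_wt_exp[OF fK, of p t] cK by simp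
  qed
  have D: "D1 t = D2 t" for t
  proof -
    have d1: "((\<lambda>t. \<Sum>B\<in>Pow K. wt p K B * exp (t * (1 + real (card B)))) has_real_derivative D1 t) (at t)"
      unfolding D1_def
    proof (rule DERIV_sum)
      fix B
      show "((\<lambda>t. wt p K B * exp (t * (1 + real (card B)))) has_real_derivative
            wt p K B * ((1 + real (card B)) * exp (t * (1 + real (card B))))) (at t)"
        by (rule derivative_eq_intros refl | simp)+
    qed
    obtain k where k: "n = Suc (Suc k)" using n2 by (metis add_2_eq_Suc le_Suc_ex)
    have d2: "((\<lambda>t. exp t * (p * exp t + 1 - p) ^ (n - 1)) has_real_derivative D2 t) (at t)"
      unfolding D2_def k by (rule derivative_eq_intros refl | simp)+
    show ?thesis using d1 d2 unfolding eqf by (rule DERIV_unique)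
  qed
  have "(\<Sum>B\<in>Pow K. wt p K B * ((1 + real (card B)) * (exp (s * (1 + real (card B))) + 1))) = D1 s + D1 0"
    unfolding D1_def by (simp add: sum.distrib[symmetric] algebra_simps)
  also have "\<dots> = D2 s + D2 0" using D by simp
  also have "\<dots> = gamma_iso n p s"
  proof -
    have e: "n - 1 = Suc (n - 2)" using n2 by simp
    have r: "real (n - 1) = real n - 1" using n2 by simp
    have r2: "real (n - 2) = real n - 2" using n2 by simp
    show ?thesis unfolding D2_def gamma_iso_def e by (simp add: r r2 algebra_simps)
  qed
  finally show ?thesis unfolding K_def .
qed

lemma finP: "finite P" by (rule finite_vpairs)

lemma sum_Y_h:
  "(\<Sum>E\<in>Pow P. wt p P E * (Yc E * h E))
     = (\<Sum>v\<in>{1..n}. (1 - p) ^ (n - 1) * (\<Sum>E\<in>Pow P. wt p P E * h (E - Sv n v)))"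
proof -
  have "(\<Sum>E\<in>Pow P. wt p P E * (Yc E * h E))
     = (\<Sum>E\<in>Pow P. \<Sum>v\<in>{1..n}. wt p P E * (if E \<inter> Sv n v = {} then h E else 0))"
  proof (rule sum.cong[OF refl])
    fix E assume "E \<in> Pow P"
    then have "Yc E = (\<Sum>v\<in>{1..n}. if E \<inter> Sv n v = {} then 1 else 0)"
      unfolding Yc_def by (intro card_iso_sum) auto
    then show "wt p P E * (Yc E * h E) = (\<Sum>v\<in>{1..n}. wt p P E * (if E \<inter> Sv n v = {} then h E else 0))"
      by (auto simp: sum_distrib_left sum_distrib_right intro!: sum.cong)
  qed
  also have "\<dots> = (\<Sum>v\<in>{1..n}. \<Sum>E\<in>Pow P. wt p P E * (if E \<inter> Sv n v = {} then h E else 0))"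
    by (rule sum.swap)
  also have "\<dots> = (\<Sum>v\<in>{1..n}. (1 - p) ^ (n - 1) * (\<Sum>E\<in>Pow P. wt p P E * h (E - Sv n v)))"
  proof (rule sum.cong[OF refl])
    fix v assume v: "v \<in> {1..n}"
    show "(\<Sum>E\<in>Pow P. wt p P E * (if E \<inter> Sv n v = {} then h E else 0)) = (1 - p) ^ (n - 1) * (\<Sum>E\<in>Pow P. wt p P E * h (E - Sv n v))"
      using sum_wt_remove[OF finP Sv_sub[of n v], of p h] card_Sv[OF v] by simp
  qed
  finally show ?thesis .
qed

definition mu0 :: real where "mu0 = (\<Sum>E\<in>Pow P. wt p P E * Yc E)"

lemma mu0_eq: "mu0 = real n * (1 - p) ^ (n - 1)"
proof -
  have "mu0 = (\<Sum>E\<in>Pow P. wt p P E * (Yc E * 1))" unfolding mu0_def by simp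
  also have "\<dots> = (\<Sum>v\<in>{1..n}. (1 - p) ^ (n - 1) * (\<Sum>E\<in>Pow P. wt p P E * 1))" by (rule sum_Y_h)
  also have "\<dots> = real n * (1 - p) ^ (n - 1)" using sum_wt[OF finP, of p] by simp
  finally show ?thesis .
qed

lemma mu0_nn: "0 \<le> mu0" unfolding mu0_eq using p1 by simp

definition mgf :: "real \<Rightarrow> real" where "mgf s = (\<Sum>E\<in>Pow P. wt p P E * exp (s * Yc E))"
definition mgf' :: "real \<Rightarrow> real" where "mgf' s = (\<Sum>E\<in>Pow P. wt p P E * (Yc E * exp (s * Yc E)))"

lemma mgf_deriv: "(mgf has_real_derivative mgf' s) (at s)"
  unfolding mgf_def[abs_def] mgf'_def
proof (rule DERIV_sum)
  fix E
  show "((\<lambda>s. wt p P E * exp (s * Yc E)) has_real_derivative wt p P E * (Yc E * exp (s * Yc E))) (at s)"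
    by (rule derivative_eq_intros refl | simp)+
qed

lemma Yc_nn: "0 \<le> Yc E" unfolding Yc_def by simp

lemma mgf_ge1: "0 \<le> s \<Longrightarrow> 1 \<le> mgf s"
proof -
  assume s: "0 \<le> s"
  have "(\<Sum>E\<in>Pow P. wt p P E * 1) \<le> mgf s" unfolding mgf_def
    using s Yc_nn wt_nn by (intro sum_mono mult_left_mono) auto
  then show ?thesis using sum_wt[OF finP, of p] by simp
qed

lemma pointwise:
  fixes s Y Y' d :: real
  assumes s: "0 \<le> s" and "Y \<le> Y'" "Y' \<le> Y + 1 + d"
  shows "exp (s * Y') - exp (s * Y) \<le> exp (s * Y) * (s / 2 * ((1 + d) * (exp (s * (1 + d)) + 1)))"
proof -
  have "Y' - Y \<le> 1 + d" using assms by simp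
  then have "s * (Y' - Y) \<le> s * (1 + d)" using s by (rule mult_left_mono)
  then have "exp (s * (Y' - Y)) \<le> exp (s * (1 + d))" by simp
  moreover have "exp (s * Y') = exp (s * Y) * exp (s * (Y' - Y))" by (simp add: exp_add[symmetric] algebra_simps)
  ultimately have "exp (s * Y') - exp (s * Y) \<le> exp (s * Y) * (exp (s * (1 + d)) - 1)"
    by (simp add: algebra_simps)
  also have "exp (s * (1 + d)) - 1 \<le> s * (1 + d) * (exp (s * (1 + d)) + 1) / 2"
    using assms by (intro exp_tanh_ineq) auto
  then have "exp (s * Y) * (exp (s * (1 + d)) - 1) \<le> exp (s * Y) * (s * (1 + d) * (exp (s * (1 + d)) + 1) / 2)"
    by (intro mult_left_mono) auto
  finally show ?thesis by (simp add: algebra_simps)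
qed

lemma per_vertex:
  assumes s: "0 \<le> s" and v: "v \<in> {1..n}"
  shows "(\<Sum>E\<in>Pow P. wt p P E * exp (s * Yc (E - Sv n v))) - mgf s \<le> s / 2 * gamma_iso n p s * mgf s"
proof -
  define S where "S = Sv n v"
  define f where "f k = (1 + k) * (exp (s * (1 + k)) + 1)" for k :: real
  define F where "F E = f (real (card (E \<inter> S)))" for E
  define G where "G E = exp (s * Yc E)" for E
  have "(\<Sum>E\<in>Pow P. wt p P E * exp (s * Yc (E - S))) - mgf s = (\<Sum>E\<in>Pow P. wt p P E * (exp (s * Yc (E - S)) - exp (s * Yc E)))"
    unfolding mgf_def by (simp add: sum_subtractf algebra_simps)
  also have "\<dots> \<le> (\<Sum>E\<in>Pow P. wt p P E * (exp (s * Yc E) * (s / 2 * F E)))"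
  proof (rule sum_mono)
    fix E assume E: "E \<in> Pow P"
    have a: "Yc E \<le> Yc (E - S)" unfolding Yc_def by (simp add: card_iso_anti)
    have b: "Yc (E - S) \<le> Yc E + 1 + real (card (E \<inter> S))"
      unfolding Yc_def S_def using card_iso_remove[OF v, of E] E by simp
    show "wt p P E * (exp (s * Yc (E - S)) - exp (s * Yc E)) \<le> wt p P E * (exp (s * Yc E) * (s / 2 * F E))"
      unfolding F_def f_def by (intro mult_left_mono pointwise[OF s a b] wt_nn)
  qed
  also have "\<dots> = s / 2 * (\<Sum>E\<in>Pow P. wt p P E * F E * G E)"
    unfolding G_def by (simp add: sum_distrib_left algebra_simps)
  also have "(\<Sum>E\<in>Pow P. wt p P E * F E * G E) \<le> (\<Sum>E\<in>Pow P. wt p P E * F E) * (\<Sum>E\<in>Pow P. wt p P E * G E)"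
  proof (rule harris[OF finP])
    show "0 \<le> p" "p \<le> 1" using p0 p1 by auto
  next
    fix E E' assume "E \<subseteq> E'" "E' \<subseteq> P"
    then have "card (E \<inter> S) \<le> card (E' \<inter> S)"
      by (intro card_mono) (auto intro: finite_subset[OF _ finP])
    then have k: "real (card (E \<inter> S)) \<le> real (card (E' \<inter> S))" by simp
    then have "exp (s * (1 + real (card (E \<inter> S)))) \<le> exp (s * (1 + real (card (E' \<inter> S))))"
      using s by (simp add: mult_left_mono)
    then show "F E \<le> F E'" unfolding F_def f_def using k
      by (intro mult_mono add_mono) auto
  next
    fix E E' assume "E \<subseteq> E'" "E' \<subseteq> P"
    then have "Yc E' \<le> Yc E" unfolding Yc_def by (simp add: card_iso_anti)
    then show "G E' \<le> G E" unfolding G_def using s by (simp add: mult_left_mono)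
  qed
  also have "(\<Sum>E\<in>Pow P. wt p P E * F E) = gamma_iso n p s"
    unfolding F_def S_def using sum_wt_count[OF finP Sv_sub[of n v], of p f] gamma_sum[OF v, of s]
    unfolding f_def by simp
  also have "(\<Sum>E\<in>Pow P. wt p P E * G E) = mgf s" unfolding G_def mgf_def ..
  finally show ?thesis unfolding S_def using s by (simp add: mult_left_mono)
qed

lemma key:
  assumes s: "0 \<le> s"
  shows "mgf' s - mu0 * mgf s \<le> mu0 * (s / 2 * gamma_iso n p s * mgf s)"
proof -
  have "mgf' s = (\<Sum>v\<in>{1..n}. (1 - p) ^ (n - 1) * (\<Sum>E\<in>Pow P. wt p P E * exp (s * Yc (E - Sv n v))))"
    unfolding mgf'_def by (rule sum_Y_h)
  moreover have "mu0 * mgf s = (\<Sum>v\<in>{1..n}. (1 - p) ^ (n - 1) * mgf s)" unfolding mu0_eq by simp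
  ultimately have "mgf' s - mu0 * mgf s = (\<Sum>v\<in>{1..n}. (1 - p) ^ (n - 1) * (\<Sum>E\<in>Pow P. wt p P E * exp (s * Yc (E - Sv n v)))) - (\<Sum>v\<in>{1..n}. (1 - p) ^ (n - 1) * mgf s)"
    by (simp only:)
  also have "\<dots> = (\<Sum>v\<in>{1..n}. (1 - p) ^ (n - 1) * ((\<Sum>E\<in>Pow P. wt p P E * exp (s * Yc (E - Sv n v))) - mgf s))"
    by (simp only: sum_subtractf[symmetric] right_diff_distrib)
  also have "\<dots> \<le> (\<Sum>v\<in>{1..n}. (1 - p) ^ (n - 1) * (s / 2 * gamma_iso n p s * mgf s))"
    using per_vertex[OF s] p1 by (intro sum_mono mult_left_mono) auto
  also have "\<dots> = mu0 * (s / 2 * gamma_iso n p s * mgf s)" unfolding mu0_eq by simp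
  finally show ?thesis .
qed

lemma gamma_mono:
  assumes "0 \<le> s" "s \<le> s0"
  shows "gamma_iso n p s \<le> gamma_iso n p s0"
proof -
  have e: "exp s \<le> exp s0" using assms by simp
  have "0 \<le> p * exp s" using p0 by simp
  then have x0: "0 \<le> p * exp s + 1 - p" using p1 by linarith
  have x: "p * exp s + 1 - p \<le> p * exp s0 + 1 - p" using e p0 by simp
  have "0 \<le> real n * p * exp s" using p0 by simp
  then have y0: "0 \<le> real n * p * exp s + 1 - p" using p1 by linarith
  have "real n * p * exp s \<le> real n * p * exp s0" using e p0 by (intro mult_left_mono) auto
  then have y: "real n * p * exp s + 1 - p \<le> real n * p * exp s0 + 1 - p" by simp
  have "exp s * (p * exp s + 1 - p) ^ (n - 2) * (real n * p * exp s + 1 - p)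
      \<le> exp s0 * (p * exp s0 + 1 - p) ^ (n - 2) * (real n * p * exp s0 + 1 - p)"
    using e x0 x y0 y by (intro mult_mono power_mono) auto
  then show ?thesis unfolding gamma_iso_def by simp
qed

lemma mgf_bound:
  assumes s: "0 \<le> s" "s \<le> s0"
  shows "mgf s \<le> exp (s * mu0 + mu0 * gamma_iso n p s0 * s\<^sup>2 / 4)"
proof -
  define g0 where "g0 = gamma_iso n p s0"
  define L where "L x = ln (mgf x) - x * mu0 - mu0 * g0 * x\<^sup>2 / 4" for x
  have "L s \<le> L 0"
  proof (rule DERIV_nonpos_imp_nonincreasing[OF s(1)])
    fix x assume x: "0 \<le> x" "x \<le> s"
    have m1: "1 \<le> mgf x" using mgf_ge1[OF x(1)] .
    have dl: "((\<lambda>x. ln (mgf x)) has_real_derivative (1 / mgf x) * mgf' x) (at x)"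
      by (rule DERIV_chain2[OF DERIV_ln_divide mgf_deriv]) (use m1 in auto)
    have d: "(L has_real_derivative ((1 / mgf x) * mgf' x - mu0 - mu0 * g0 * (2 * x) / 4)) (at x)"
      unfolding L_def[abs_def]
      by (rule derivative_eq_intros dl refl | simp)+
    have k: "mgf' x \<le> mu0 * mgf x + mu0 * (x / 2 * gamma_iso n p x * mgf x)" using key[OF x(1)] by simp
    have gx: "gamma_iso n p x \<le> g0" unfolding g0_def using gamma_mono[OF x(1)] x s by simp
    have "mu0 * (x / 2 * gamma_iso n p x * mgf x) \<le> mu0 * (x / 2 * g0 * mgf x)"
      using mu0_nn x m1 gx by (intro mult_left_mono mult_right_mono) auto
    with k have "mgf' x \<le> mgf x * (mu0 + mu0 * g0 * x / 2)" by (simp add: algebra_simps)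
    then have "mgf' x / mgf x \<le> mu0 + mu0 * g0 * x / 2" using m1 by (simp add: divide_le_eq mult.commute)
    moreover have "mu0 * g0 * (2 * x) / 4 = mu0 * g0 * x / 2" by simp
    moreover have "(1 / mgf x) * mgf' x = mgf' x / mgf x" by simp
    ultimately have "(1 / mgf x) * mgf' x - mu0 - mu0 * g0 * (2 * x) / 4 \<le> 0" by linarith
    then show "\<exists>y. (L has_real_derivative y) (at x) \<and> y \<le> 0" using d by blast
  qed
  moreover have "L 0 = 0" unfolding L_def mgf_def using sum_wt[OF finP, of p] by simp
  ultimately have "ln (mgf s) \<le> s * mu0 + mu0 * g0 * s\<^sup>2 / 4" unfolding L_def by simp
  then have "exp (ln (mgf s)) \<le> exp (s * mu0 + mu0 * g0 * s\<^sup>2 / 4)" by simp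
  then show ?thesis using mgf_ge1[OF s(1)] unfolding g0_def by simp
qed

lemma chernoff:
  assumes s: "0 \<le> s" "s \<le> s0"
  shows "(\<Sum>E\<in>Pow P. wt p P E * (if x \<le> Yc E - mu0 then 1 else 0))
          \<le> exp (- s * x + mu0 * gamma_iso n p s0 * s\<^sup>2 / 4)"
proof -
  have "(\<Sum>E\<in>Pow P. wt p P E * (if x \<le> Yc E - mu0 then 1 else 0))
        \<le> (\<Sum>E\<in>Pow P. wt p P E * (exp (s * Yc E) * exp (- s * mu0 - s * x)))"
  proof (intro sum_mono mult_left_mono wt_nn)
    fix E
    have "exp (s * Yc E) * exp (- s * mu0 - s * x) = exp (s * (Yc E - mu0 - x))"
      by (simp add: exp_add[symmetric] algebra_simps)
    moreover have "x \<le> Yc E - mu0 \<Longrightarrow> 1 \<le> exp (s * (Yc E - mu0 - x))" using s by simp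
    ultimately show "(if x \<le> Yc E - mu0 then 1 else 0) \<le> exp (s * Yc E) * exp (- s * mu0 - s * x)"
      by auto
  qed
  also have "\<dots> = mgf s * exp (- s * mu0 - s * x)" unfolding mgf_def sum_distrib_right
    by (simp add: mult.assoc)
  also have "\<dots> \<le> exp (s * mu0 + mu0 * gamma_iso n p s0 * s\<^sup>2 / 4) * exp (- s * mu0 - s * x)"
    using mgf_bound[OF s] by (intro mult_right_mono) auto
  also have "\<dots> = exp (- s * x + mu0 * gamma_iso n p s0 * s\<^sup>2 / 4)"
    by (simp add: exp_add[symmetric] algebra_simps)
  finally show ?thesis .
qed

lemma bridge:
  fixes f :: "(nat set \<Rightarrow> bool) \<Rightarrow> real"
  shows "measure_pmf.expectation (ER_graph n p) f = (\<Sum>E\<in>Pow P. wt p P E * f (\<lambda>e. e \<in> E))"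
proof -
  define emb where "emb E = (\<lambda>e. e \<in> E)" for E :: "nat set set"
  have inj: "inj_on emb (Pow P)" unfolding inj_on_def emb_def by (auto simp: fun_eq_iff)
  have "measure_pmf.expectation (ER_graph n p) f = (\<Sum>G\<in>emb ` Pow P. pmf (ER_graph n p) G *\<^sub>R f G)"
  proof (rule integral_measure_pmf)
    show "finite (emb ` Pow P)" using finP by simp
  next
    fix G assume "G \<in> set_pmf (ER_graph n p)"
    then have "pmf (ER_graph n p) G \<noteq> 0" by (simp add: set_pmf_iff)
    then have out: "\<forall>x. x \<notin> P \<longrightarrow> \<not> G x" unfolding ER_graph_def
      using pmf_Pi_outside[OF finP, of G False] by auto
    have "G = emb {e \<in> P. G e}" unfolding emb_def using out by (auto simp: fun_eq_iff)
    then show "G \<in> emb ` Pow P" by blast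
  qed
  also have "\<dots> = (\<Sum>E\<in>Pow P. pmf (ER_graph n p) (emb E) * f (emb E))"
    by (simp add: sum.reindex[OF inj])
  also have "\<dots> = (\<Sum>E\<in>Pow P. wt p P E * f (emb E))"
  proof (intro sum.cong refl)
    fix E assume E: "E \<in> Pow P"
    have "pmf (ER_graph n p) (emb E) = (\<Prod>e\<in>P. pmf (bernoulli_pmf p) (emb E e))"
      unfolding ER_graph_def using E by (intro pmf_Pi'[OF finP]) (auto simp: emb_def)
    also have "\<dots> = wt p P E" unfolding wt_def emb_def using p0 p1
      by (intro prod.cong) auto
    finally show "pmf (ER_graph n p) (emb E) * f (emb E) = wt p P E * f (emb E)" by simp
  qed
  finally show ?thesis unfolding emb_def .
qed

lemma mean_eq: "iso_mean n p = mu0"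
  unfolding iso_mean_def mu0_def bridge Yc_def isolated_count_set ..

lemma prob_eq:
  "measure_pmf.prob (ER_graph n p) {G. Q (real (isolated_count n G))}
     = (\<Sum>E\<in>Pow P. wt p P E * (if Q (Yc E) then 1 else 0))"
proof -
  have "measure_pmf.prob (ER_graph n p) {G. Q (real (isolated_count n G))}
      = measure_pmf.expectation (ER_graph n p) (indicator {G. Q (real (isolated_count n G))})"
    by simp
  also have "\<dots> = (\<Sum>E\<in>Pow P. wt p P E * (if Q (Yc E) then 1 else 0))"
    unfolding bridge by (simp add: indicator_def Yc_def isolated_count_set of_bool_def)
  finally show ?thesis .
qed

end

lemma gamma_pos: "1 \<le> n \<Longrightarrow> 0 < p \<Longrightarrow> p < 1 \<Longrightarrow> 0 < gamma_iso n p s"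
proof -
  assume p: "0 < p" "p < 1" and n1: "1 \<le> n"
  have "0 \<le> p * exp s" using p by simp
  then have x0: "0 \<le> p * exp s + 1 - p" using p by linarith
  have "0 \<le> real n * p * exp s" using p by simp
  then have y0: "0 \<le> real n * p * exp s + 1 - p" using p by linarith
  have "0 \<le> exp s * (p * exp s + 1 - p) ^ (n - 2) * (real n * p * exp s + 1 - p)"
    using x0 y0 by simp
  moreover have "0 \<le> (real n - 1) * p" using p n1 by simp
  ultimately show ?thesis unfolding gamma_iso_def by linarith
qed

theorem mainTheorem2:
  fixes n :: nat and p t \<theta>\<^sub>0 :: real
  assumes "n \<ge> 2" and "0 < p" and "p < 1" and "\<theta>\<^sub>0 \<ge> 0" and "t \<ge> 0"
  defines "\<mu> \<equiv> iso_mean n p"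
      and "\<sigma> \<equiv> sqrt (iso_var n p)"
  defines "\<gamma> \<equiv> gamma_iso n p (\<theta>\<^sub>0 / \<sigma>)"
  shows "measure_pmf.prob (ER_graph n p)
           {G. (real (isolated_count n G) - \<mu>) / \<sigma> \<ge> t}
         \<le> (if t \<le> \<theta>\<^sub>0 * \<mu> * \<gamma> / (2 * \<sigma>\<^sup>2)
             then exp (- (t\<^sup>2 * \<sigma>\<^sup>2 / (\<mu> * \<gamma>)))
             else exp (- \<theta>\<^sub>0 * t + \<mu> * \<gamma> * \<theta>\<^sub>0\<^sup>2 / (4 * \<sigma>\<^sup>2)))"
proof -
  note A = assms(1-3)
  define R where "R = (if t \<le> \<theta>\<^sub>0 * \<mu> * \<gamma> / (2 * \<sigma>\<^sup>2)
             then exp (- (t\<^sup>2 * \<sigma>\<^sup>2 / (\<mu> * \<gamma>)))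
             else exp (- \<theta>\<^sub>0 * t + \<mu> * \<gamma> * \<theta>\<^sub>0\<^sup>2 / (4 * \<sigma>\<^sup>2)))"
  have R0: "0 \<le> R" unfolding R_def by simp
  have mu: "\<mu> = mu0 n p" unfolding \<mu>_def using mean_eq[OF A] .
  have mupos: "0 < \<mu>" unfolding mu mu0_eq[OF A] using A by simp
  have gpos: "0 < \<gamma>" unfolding \<gamma>_def using gamma_pos[of n p] A by simp
  have "0 \<le> iso_var n p" unfolding iso_var_def by (rule Bochner_Integration.integral_nonneg) simp
  then have sig0: "0 \<le> \<sigma>" unfolding \<sigma>_def by simp
  have "measure_pmf.prob (ER_graph n p) {G. (real (isolated_count n G) - \<mu>) / \<sigma> \<ge> t} \<le> R"
  proof (cases "\<sigma> = 0")
    case True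
    show ?thesis
    proof (cases "t = 0")
      case True
      with \<open>\<sigma> = 0\<close> have "R = 1" unfolding R_def by simp
      then show ?thesis by simp
    next
      case False
      with \<open>\<sigma> = 0\<close> assms(5) have "{G. (real (isolated_count n G) - \<mu>) / \<sigma> \<ge> t} = {}" by auto
      then show ?thesis using R0 by simp
    qed
  next
    case False
    then have sp: "0 < \<sigma>" using sig0 by simp
    define s0 where "s0 = \<theta>\<^sub>0 / \<sigma>"
    have s0: "0 \<le> s0" unfolding s0_def using assms(4) sp by simp
    have "{G. (real (isolated_count n G) - \<mu>) / \<sigma> \<ge> t} = {G. t * \<sigma> \<le> real (isolated_count n G) - \<mu>}"
      using sp by (simp add: pos_le_divide_eq)
    then have pe: "measure_pmf.prob (ER_graph n p) {G. (real (isolated_count n G) - \<mu>) / \<sigma> \<ge> t}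
         = (\<Sum>E\<in>Pow (vpairs n). wt p (vpairs n) E * (if t * \<sigma> \<le> Yc n E - mu0 n p then 1 else 0))"
      using prob_eq[OF A, of "\<lambda>y. t * \<sigma> \<le> y - \<mu>"] unfolding mu by simp
    have ch: "measure_pmf.prob (ER_graph n p) {G. (real (isolated_count n G) - \<mu>) / \<sigma> \<ge> t}
          \<le> exp (- s * (t * \<sigma>) + \<mu> * \<gamma> * s\<^sup>2 / 4)" if "0 \<le> s" "s \<le> s0" for s
      unfolding pe using chernoff[OF A that] unfolding mu \<gamma>_def s0_def by simp
    have mg: "0 < \<mu> * \<gamma>" using mupos gpos by simp
    show ?thesis
    proof (cases "t \<le> \<theta>\<^sub>0 * \<mu> * \<gamma> / (2 * \<sigma>\<^sup>2)")
      case True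
      define s where "s = 2 * t * \<sigma> / (\<mu> * \<gamma>)"
      have s1: "0 \<le> s" unfolding s_def using mg sp assms(5) by simp
      have "2 * t * \<sigma> * \<sigma> \<le> \<theta>\<^sub>0 * (\<mu> * \<gamma>)" using True sp by (simp add: field_simps power2_eq_square)
      then have s2: "s \<le> s0" unfolding s_def s0_def using mg sp by (simp add: field_simps)
      have "- s * (t * \<sigma>) + \<mu> * \<gamma> * s\<^sup>2 / 4 = - (t\<^sup>2 * \<sigma>\<^sup>2 / (\<mu> * \<gamma>))"
        unfolding s_def using mg by (simp add: field_simps power2_eq_square)
      then show ?thesis using ch[OF s1 s2] True unfolding R_def by simp
    next
      case False
      have "- s0 * (t * \<sigma>) + \<mu> * \<gamma> * s0\<^sup>2 / 4 = - \<theta>\<^sub>0 * t + \<mu> * \<gamma> * \<theta>\<^sub>0\<^sup>2 / (4 * \<sigma>\<^sup>2)"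
        unfolding s0_def using sp by (simp add: field_simps power2_eq_square)
      then show ?thesis using ch[OF s0 order_refl] False unfolding R_def by simp
    qed
  qed
  then show ?thesis unfolding R_def .
qed


end
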